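(* Let $\mathcal A_+,\mathcal A_-\subseteq\mathbb Z^n$ be disjoint finite sets, $\mathcal A=\mathcal A_+\cup\mathcal A_-$, with $\mathcal A_-\neq\varnothing$ and $\mathcal A_-\subseteq\operatorname{relint}(\operatorname{conv}(\mathcal A_+))$. Let $f\in\mathcal S(\mathcal A_+,\mathcal A_-)$ have nonsigned coefficients $c\in\mathbb R^{\mathcal A}_{>0}$, let $F$ be the critical system of $(\mathcal A_+,\mathcal A_-)$ and $h:\mathcal A\to\mathbb Z$ a height function lifting $\mathcal A_-$. Let $S:=\{t\in\mathbb R_{>0}: F(c\star t^h,x)=0\text{ for some }x\in\mathbb R^n_{>0}\}$. Then (i) $S$ has a minimum $t_*$, and (ii) $f$ is copositive if and only if $t_*\ge1$.
   Context: For disjoint finite $\mathcal A_+,\mathcal A_-\subseteq\mathbb R^n$, a signomial with signed support $(\mathcal A_+,\mathcal A_-)$ is a function $f:\mathbb R^n_{>0}\to\mathbb R$, $f(x)=\sum_{a\in\mathcal A_+}c_ax^a-\sum_{b\in\mathcal A_-}c_bx^b$ with all $c_a,c_b>0$ (the nonsigned coefficients). $\mathcal S(\mathcal A_+,\mathcal A_-)$ is the set of such signomials, identified with $\mathbb R^{\mathcal A}_{>0}$; $f_c$ denotes the signomial with nonsigned coefficients $c$. $f$ is copositive if $f\ge0$ on $\mathbb R^n_{>0}$. The critical system of $(\mathcal A_+,\mathcal A_-)$ is $F(c,x)=(f_c(x),x_1\partial_{x_1}f_c(x),\dots,x_n\partial_{x_n}f_c(x))$. A height function $h:\mathcal A\to\mathbb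 Z$ lifts $\mathcal A_-$ if $h(a)>0$ for $a\in\mathcal A_-$ and $h(a)=0$ for $a\in\mathcal A_+$; $c\star t^h=(c_at^{h(a)})_{a\in\mathcal A}$. *)

theory Defs
  imports "HOL-Analysis.Analysis"
begin

definition mon :: "real ^ 'n \<Rightarrow> int ^ 'n \<Rightarrow> real" where
  "mon x a = (\<Prod>i\<in>UNIV. (x $ i) powi (a $ i))"

definition pos_orthant :: "(real ^ 'n) set" where
  "pos_orthant = {x. \<forall>i. 0 < x $ i}"

definition signomial :: "(int ^ 'n) set \<Rightarrow> (int ^ 'n) set \<Rightarrow> (int ^ 'n \<Rightarrow> real) \<Rightarrow> real ^ 'n \<Rightarrow> real" where
  "signomial Ap Am c x = (\<Sum>a\<in>Ap. c a * mon x a) - (\<Sum>b\<in>Am. c b * mon x b)"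

definition copositive_on_orthant :: "(real ^ 'n \<Rightarrow> real) \<Rightarrow> bool" where
  "copositive_on_orthant f \<longleftrightarrow> (\<forall>x\<in>pos_orthant. 0 \<le> f x)"

definition real_vec :: "int ^ 'n \<Rightarrow> real ^ 'n" where
  "real_vec a = (\<chi> i. real_of_int (a $ i))"

definition partial :: "(real ^ 'n \<Rightarrow> real) \<Rightarrow> 'n \<Rightarrow> real ^ 'n \<Rightarrow> real" where
  "partial g i x = deriv (\<lambda>s. g (\<chi> j. if j = i then s else x $ j)) (x $ i)"

definition critical_zero :: "(int ^ 'n) set \<Rightarrow> (int ^ 'n) set \<Rightarrow> (int ^ 'n \<Rightarrow> real) \<Rightarrow> real ^ 'n \<Rightarrow> bool" where
  "critical_zero Ap Am c x \<longleftrightarrow>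
     signomial Ap Am c x = 0 \<and> (\<forall>i. x $ i * partial (signomial Ap Am c) i x = 0)"

definition star_pow :: "(int ^ 'n \<Rightarrow> real) \<Rightarrow> real \<Rightarrow> (int ^ 'n \<Rightarrow> int) \<Rightarrow> int ^ 'n \<Rightarrow> real" where
  "star_pow c t h = (\<lambda>a. c a * t powi h a)"

end

theory Submission
  imports Defs
begin


definition E :: "real^'n \<Rightarrow> real^'n" where "E y = (\<chi> i. exp (y$i))"

lemma mon_E: "mon (E y) a = exp (real_vec a \<bullet> y)"
  unfolding mon_def E_def real_vec_def inner_vec_def
  by (simp add: exp_power_int exp_sum)

lemma E_ln: "x \<in> pos_orthant \<Longrightarrow> E (\<chi> i. ln (x$i)) = x"
  by (simp add: E_def pos_orthant_def vec_eq_iff)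

lemma E_pos: "E y \<in> pos_orthant"
  by (simp add: E_def pos_orthant_def)

definition sg :: "(int^'n) set \<Rightarrow> (int^'n) set \<Rightarrow> (int^'n \<Rightarrow> real) \<Rightarrow> (int^'n \<Rightarrow> int) \<Rightarrow> real \<Rightarrow> real^'n \<Rightarrow> real" where
 "sg Ap Am c h t y = (\<Sum>a\<in>Ap. c a * exp (real_vec a \<bullet> y)) - (\<Sum>b\<in>Am. c b * t ^ nat (h b) * exp (real_vec b \<bullet> y))"

lemma sig_sg:
  assumes "\<forall>a\<in>Ap. h a = 0" "\<forall>a\<in>Am. 0 < h a"
  shows "signomial Ap Am (star_pow c t h) (E y) = sg Ap Am c h t y"
proof -
  have 1: "(\<Sum>a\<in>Ap. star_pow c t h a * mon (E y) a) = (\<Sum>a\<in>Ap. c a * exp (real_vec a \<bullet> y))"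
    by (rule sum.cong) (auto simp: star_pow_def mon_E assms(1))
  have 2: "(\<Sum>a\<in>Am. star_pow c t h a * mon (E y) a) = (\<Sum>b\<in>Am. c b * t ^ nat (h b) * exp (real_vec b \<bullet> y))"
  proof (rule sum.cong)
    fix b assume "b \<in> Am"
    then have "h b \<ge> 0" using assms(2) by auto
    then show "star_pow c t h b * mon (E y) b = c b * t ^ nat (h b) * exp (real_vec b \<bullet> y)"
      by (simp add: star_pow_def mon_E power_int_def)
  qed simp
  show ?thesis unfolding signomial_def sg_def 1 2 ..
qed

lemma sg_cont: "continuous_on UNIV (\<lambda>p. sg Ap Am c h (fst p) (snd p))"
  unfolding sg_def by (intro continuous_intros)

lemma sg_shift:
  assumes "\<forall>a\<in>Ap. real_vec a \<bullet> z = k" "\<forall>b\<in>Am. real_vec b \<bullet> z = k"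
  shows "sg Ap Am c h t (y + z) = exp k * sg Ap Am c h t y"
proof -
  have 1: "(\<Sum>a\<in>Ap. c a * exp (real_vec a \<bullet> (y + z))) = exp k * (\<Sum>a\<in>Ap. c a * exp (real_vec a \<bullet> y))"
    unfolding sum_distrib_left by (rule sum.cong) (auto simp: inner_add_right exp_add assms)
  have 2: "(\<Sum>a\<in>Am. c a * t ^ nat (h a) * exp (real_vec a \<bullet> (y + z))) = exp k * (\<Sum>a\<in>Am. c a * t ^ nat (h a) * exp (real_vec a \<bullet> y))"
    unfolding sum_distrib_left by (rule sum.cong) (auto simp: inner_add_right exp_add assms)
  show ?thesis unfolding sg_def 1 2 by (simp add: right_diff_distrib)
qed

lemma differentiable_prod_at:
  fixes f :: "'a \<Rightarrow> real \<Rightarrow> real"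
  assumes "finite A" "\<forall>j\<in>A. f j differentiable at s"
  shows "(\<lambda>s. \<Prod>j\<in>A. f j s) differentiable at s"
  using assms by (induction A rule: finite_induct) auto

lemma sig_diff:
  assumes "finite Ap" "finite Am" "0 < s"
  shows "(\<lambda>s. signomial Ap Am c (\<chi> j. if j = i then s else x $ j)) differentiable at s"
proof -
  have m: "(\<lambda>s. mon (\<chi> j. if j = i then s else x $ j) a) differentiable at s" for a
    unfolding mon_def
  proof (rule differentiable_prod_at)
    show "\<forall>j\<in>UNIV. (\<lambda>s. (\<chi> j. if j = i then s else x $ j) $ j powi a $ j) differentiable at s"
    proof
      fix j
      show "(\<lambda>s. (\<chi> j. if j = i then s else x $ j) $ j powi a $ j) differentiable at s"
      proof (cases "j = i")
        case True
        then show ?thesis using assms(3) by (simp add: differentiable_power_int)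
      next
        case False
        then show ?thesis by simp
      qed
    qed
  qed simp
  show ?thesis unfolding signomial_def
    using assms m by (intro differentiable_diff differentiable_sum) auto
qed

lemma crit:
  fixes g :: "real^'n \<Rightarrow> real"
  assumes "x \<in> pos_orthant" "\<forall>x'\<in>pos_orthant. g x \<le> g x'"
    "(\<lambda>s. g (\<chi> j. if j = i then s else x $ j)) differentiable at (x$i)"
  shows "partial g i x = 0"
proof -
  let ?p = "\<lambda>s. g (\<chi> j. if j = i then s else x $ j)"
  have D: "DERIV ?p (x$i) :> deriv ?p (x$i)"
    using assms(3) DERIV_deriv_iff_real_differentiable by blast
  have xi: "0 < x$i" using assms(1) by (simp add: pos_orthant_def)
  have eq: "(\<chi> j. if j = i then x$i else x $ j) = x" by (simp add: vec_eq_iff)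
  have "\<forall>s. \<bar>x$i - s\<bar> < x$i \<longrightarrow> ?p (x$i) \<le> ?p s"
  proof (intro allI impI)
    fix s assume "\<bar>x$i - s\<bar> < x$i"
    then have "0 < s" by linarith
    then have "(\<chi> j. if j = i then s else x $ j) \<in> pos_orthant"
      using assms(1) by (simp add: pos_orthant_def)
    then show "?p (x$i) \<le> ?p s" using assms(2) eq by auto
  qed
  then have "deriv ?p (x$i) = 0" using DERIV_local_min[OF D xi] by blast
  then show ?thesis unfolding partial_def .
qed



lemma relint_weights:
  fixes P :: "'a::euclidean_space set"
  assumes fin: "finite P" and z: "z \<in> rel_interior (convex hull P)"
  shows "\<exists>u. (\<forall>p\<in>P. 0 < u p) \<and> sum u P = 1 \<and> (\<Sum>p\<in>P. u p *\<^sub>R p) = z"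
proof -
  have ne: "P \<noteq> {}" using z by auto
  have cne: "convex hull P \<noteq> {}" using ne by simp
  have "\<forall>s\<in>P. \<exists>v. (\<forall>p\<in>P. 0 \<le> v p) \<and> 0 < v s \<and> sum v P = 1 \<and> (\<Sum>p\<in>P. v p *\<^sub>R p) = z"
  proof
    fix s assume s: "s \<in> P"
    then have "s \<in> convex hull P" by (simp add: hull_inc)
    then obtain e where e: "e > 1" "(1 - e) *\<^sub>R s + e *\<^sub>R z \<in> convex hull P"
      using convex_rel_interior_iff[OF convex_convex_hull cne] z by blast
    then obtain w where w: "\<forall>p\<in>P. 0 \<le> w p" "sum w P = 1"
      "(\<Sum>p\<in>P. w p *\<^sub>R p) = (1 - e) *\<^sub>R s + e *\<^sub>R z"
      using convex_hull_finite[OF fin] by auto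
    define v where "v p = w p / e + (if p = s then 1 - 1/e else 0)" for p
    have e1: "0 < 1 - 1/e" using e by (simp add: field_simps)
    have "\<forall>p\<in>P. 0 \<le> v p" using w(1) e e1 by (auto simp: v_def)
    moreover have "0 < v s"
    proof -
      have "0 \<le> w s / e" using w(1) s e by auto
      then show ?thesis using e1 by (simp add: v_def)
    qed
    moreover have "sum v P = 1"
      unfolding v_def sum.distrib using w(2) s fin
      by (simp add: sum_divide_distrib[symmetric] sum.delta)
    moreover have "(\<Sum>p\<in>P. v p *\<^sub>R p) = z"
    proof -
      have "(\<Sum>p\<in>P. v p *\<^sub>R p) = (1/e) *\<^sub>R (\<Sum>p\<in>P. w p *\<^sub>R p) + (1 - 1/e) *\<^sub>R s"
      proof -
        have "(\<Sum>p\<in>P. (if p = s then 1-1/e else 0) *\<^sub>R p) = (\<Sum>p\<in>P. if p = s then (1-1/e) *\<^sub>R p else 0)"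
          by (rule sum.cong) auto
        also have "\<dots> = (1-1/e) *\<^sub>R s" using s fin by (simp add: sum.delta)
        finally have 1: "(\<Sum>p\<in>P. (if p = s then 1-1/e else 0) *\<^sub>R p) = (1-1/e) *\<^sub>R s" .
        show ?thesis
          unfolding v_def scaleR_add_left sum.distrib scaleR_sum_right 1
          by (simp add: divide_inverse mult.commute)
      qed
      also have "\<dots> = z" unfolding w(3) using e
        by (simp add: scaleR_add_right algebra_simps)
      finally show ?thesis .
    qed
    ultimately show "\<exists>v. (\<forall>p\<in>P. 0 \<le> v p) \<and> 0 < v s \<and> sum v P = 1 \<and> (\<Sum>p\<in>P. v p *\<^sub>R p) = z"
      by blast
  qed
  then obtain V where V: "\<forall>s\<in>P. (\<forall>p\<in>P. 0 \<le> V s p) \<and> 0 < V s s \<and> sum (V s) P = 1 \<and> (\<Sum>p\<in>P. V s p *\<^sub>R p) = z"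
    by metis
  have cP: "0 < real (card P)" using fin ne by (simp add: card_gt_0_iff)
  define u where "u p = (\<Sum>s\<in>P. V s p) / card P" for p
  have "\<forall>p\<in>P. 0 < u p"
  proof
    fix p assume p: "p \<in> P"
    have "V p p \<le> (\<Sum>s\<in>P. V s p)"
      using V p fin by (intro member_le_sum) auto
    moreover have "0 < V p p" using V p by auto
    ultimately have "0 < (\<Sum>s\<in>P. V s p)" by linarith
    then show "0 < u p" using cP by (simp add: u_def)
  qed
  moreover have "sum u P = 1"
  proof -
    have "sum u P = (\<Sum>p\<in>P. \<Sum>s\<in>P. V s p) / card P"
      unfolding u_def sum_divide_distrib[symmetric] ..
    also have "\<dots> = (\<Sum>s\<in>P. sum (V s) P) / card P"
      by (subst sum.swap) (rule refl)
    also have "\<dots> = 1" using V cP by simp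
    finally show ?thesis .
  qed
  moreover have "(\<Sum>p\<in>P. u p *\<^sub>R p) = z"
  proof -
    have "(\<Sum>p\<in>P. u p *\<^sub>R p) = (1 / card P) *\<^sub>R (\<Sum>s\<in>P. (\<Sum>p\<in>P. V s p *\<^sub>R p))"
      unfolding u_def scaleR_sum_right scaleR_sum_left
      by (subst sum.swap) (rule sum.cong[OF refl], simp add: divide_inverse sum_distrib_left scaleR_sum_left mult.commute)
    also have "\<dots> = (1 / card P) *\<^sub>R (\<Sum>s\<in>P. z)" using V by simp
    also have "\<dots> = z" using cP by (simp add: sum_constant_scaleR)
    finally show ?thesis .
  qed
  ultimately show ?thesis by blast
qed

lemma bound_lemma:
  fixes v :: "'a \<Rightarrow> real" and w :: "'b \<Rightarrow> real"
  assumes fin: "finite A" "finite B" and ne: "A \<noteq> {}"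
    and lam: "\<forall>b\<in>B. (\<forall>a\<in>A. mu \<le> lam b a) \<and> sum (lam b) A = 1 \<and> w b = (\<Sum>a\<in>A. lam b a * v a)"
    and mu: "0 < mu" and cm: "\<forall>a\<in>A. cmin \<le> c a" "0 < cmin"
    and d: "\<forall>b\<in>B. 0 \<le> d b"
    and ineq: "(\<Sum>a\<in>A. c a * exp (v a)) \<le> (\<Sum>b\<in>B. d b * exp (w b))"
    and Cs: "(\<Sum>b\<in>B. d b) \<le> Csum"
  shows "\<forall>a\<in>A. \<forall>a'\<in>A. v a - v a' \<le> ln (Csum / cmin) / mu"
proof -
  define m where "m = Max (v ` A)"
  define lo where "lo = Min (v ` A)"
  have "m \<in> v ` A" unfolding m_def using fin ne by (intro Max_in) auto
  then obtain amax where amax: "amax \<in> A" "v amax = m" by auto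
  have "lo \<in> v ` A" unfolding lo_def using fin ne by (intro Min_in) auto
  then obtain amin where amin: "amin \<in> A" "v amin = lo" by auto
  have vle: "v a \<le> m" if "a \<in> A" for a using that fin unfolding m_def by simp
  have vge: "lo \<le> v a" if "a \<in> A" for a using that fin unfolding lo_def by simp
  have wb: "w b \<le> m - mu * (m - lo)" if b: "b \<in> B" for b
  proof -
    have lpos: "\<forall>a\<in>A. 0 \<le> lam b a" using lam b mu by (meson less_le_trans less_imp_le)
    have "w b = (\<Sum>a\<in>A. lam b a * m) - (\<Sum>a\<in>A. lam b a * (m - v a))"
      using lam b by (simp add: sum_subtractf[symmetric] right_diff_distrib)
    also have "(\<Sum>a\<in>A. lam b a * m) = m" using lam b by (simp add: sum_distrib_right[symmetric])
    also have "lam b amin * (m - v amin) \<le> (\<Sum>a\<in>A. lam b a * (m - v a))"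
      using amin lpos vle fin by (intro member_le_sum) auto
    moreover have "mu * (m - lo) \<le> lam b amin * (m - v amin)"
    proof -
      have "mu \<le> lam b amin" using lam b amin by auto
      moreover have "0 \<le> m - lo" using vle[OF amin(1)] amin by simp
      ultimately have "mu * (m - lo) \<le> lam b amin * (m - lo)" by (rule mult_right_mono)
      then show ?thesis using amin by simp
    qed
    ultimately show ?thesis by linarith
  qed
  define X where "X = mu * (m - lo)"
  have "cmin \<le> c amax" using cm amax by blast
  then have "cmin * exp m \<le> c amax * exp (v amax)" using amax by simp
  also have "\<dots> \<le> (\<Sum>a\<in>A. c a * exp (v a))"
  proof (rule member_le_sum)
    show "\<And>x. x \<in> A - {amax} \<Longrightarrow> 0 \<le> c x * exp (v x)"
    proof -
      fix x assume "x \<in> A - {amax}"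
      then have "cmin \<le> c x" using cm by blast
      then show "0 \<le> c x * exp (v x)" using cm(2) by simp
    qed
  qed (use amax fin in auto)
  also have "\<dots> \<le> (\<Sum>b\<in>B. d b * exp (w b))" by (rule ineq)
  also have "\<dots> \<le> (\<Sum>b\<in>B. d b * exp (m - X))"
    unfolding X_def using d wb by (intro sum_mono mult_left_mono) auto
  also have "\<dots> = (\<Sum>b\<in>B. d b) * exp (m - X)" by (simp add: sum_distrib_right)
  also have "\<dots> \<le> Csum * exp (m - X)" using Cs by simp
  also have "\<dots> = exp m * (Csum * exp (- X))" by (simp add: exp_diff exp_minus field_simps)
  finally have "exp m * cmin \<le> exp m * (Csum * exp (- X))" by (simp add: mult.commute)
  then have "cmin \<le> Csum * exp (- X)" by simp
  then have "cmin * exp X \<le> Csum * exp (- X) * exp X"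
    by (intro mult_right_mono) auto
  also have "\<dots> = Csum" by (simp add: mult.assoc flip: exp_add)
  finally have "cmin * exp (mu * (m - lo)) \<le> Csum" unfolding X_def .
  then have "exp (mu * (m - lo)) \<le> Csum / cmin" using cm by (simp add: field_simps)
  then have "mu * (m - lo) \<le> ln (Csum / cmin)"
    by (metis exp_gt_zero ln_exp ln_le_cancel_iff order_less_le_trans)
  then have "m - lo \<le> ln (Csum / cmin) / mu" using mu by (simp add: field_simps)
  then show ?thesis using vle vge by (meson diff_mono order_trans)
qed


theorem corollary2p8:
  fixes Ap Am :: "(int ^ 'n) set" and c :: "int ^ 'n \<Rightarrow> real" and h :: "int ^ 'n \<Rightarrow> int"
  assumes "finite Ap" and "finite Am" and "Ap \<inter> Am = {}"
    and "Am \<noteq> {}"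
    and "real_vec ` Am \<subseteq> rel_interior (convex hull (real_vec ` Ap))"
    and "\<forall>a\<in>Ap \<union> Am. 0 < c a"
    and "\<forall>a\<in>Am. 0 < h a" and "\<forall>a\<in>Ap. h a = 0"
  defines "S \<equiv> {t::real. 0 < t \<and> (\<exists>x\<in>pos_orthant. critical_zero Ap Am (star_pow c t h) x)}"
  shows "\<exists>ts. ts \<in> S \<and> (\<forall>t\<in>S. ts \<le> t) \<and>
           (copositive_on_orthant (signomial Ap Am c) \<longleftrightarrow> 1 \<le> ts)"
proof -
  note fA = assms(1) and fB = assms(2) and neB = assms(4) and rel = assms(5)
    and cpos = assms(6) and hB = assms(7) and hA = assms(8)
  have cBp: "\<And>b. b \<in> Am \<Longrightarrow> 0 < c b" using cpos by blast
  have cAp: "\<And>a. a \<in> Ap \<Longrightarrow> 0 < c a" using cpos by blast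
  define g where "g = sg Ap Am c h"
  have sig: "signomial Ap Am (star_pow c t h) (E y) = g t y" for t y
    unfolding g_def using sig_sg[OF hA hB] .
  obtain b0 where b0: "b0 \<in> Am" using neB by auto
  have neA: "Ap \<noteq> {}"
  proof
    assume "Ap = {}"
    then have "real_vec b0 \<in> rel_interior (convex hull {})" using rel b0 by auto
    then show False by simp
  qed
  obtain a0 where a0: "a0 \<in> Ap" using neA by auto
  have injr: "inj_on real_vec Ap"
    unfolding inj_on_def real_vec_def by (simp add: vec_eq_iff)
  have "\<forall>b\<in>Am. \<exists>u. (\<forall>a\<in>Ap. 0 < u a) \<and> sum u Ap = 1 \<and> (\<Sum>a\<in>Ap. u a *\<^sub>R real_vec a) = real_vec b"
  proof
    fix b assume b: "b \<in> Am"
    then obtain u where u: "\<forall>p\<in>real_vec ` Ap. 0 < u p" "sum u (real_vec ` Ap) = 1"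
      "(\<Sum>p\<in>real_vec ` Ap. u p *\<^sub>R p) = real_vec b"
      using relint_weights[OF finite_imageI[OF fA]] rel by blast
    have "(\<forall>a\<in>Ap. 0 < (u \<circ> real_vec) a) \<and> sum (u \<circ> real_vec) Ap = 1 \<and>
      (\<Sum>a\<in>Ap. (u \<circ> real_vec) a *\<^sub>R real_vec a) = real_vec b"
      using u sum.reindex[OF injr, of u] sum.reindex[OF injr, of "\<lambda>p. u p *\<^sub>R p"]
      by (auto simp: o_def)
    then show "\<exists>u. (\<forall>a\<in>Ap. 0 < u a) \<and> sum u Ap = 1 \<and> (\<Sum>a\<in>Ap. u a *\<^sub>R real_vec a) = real_vec b"
      by blast
  qed
  then obtain lam where lam: "\<forall>b\<in>Am. (\<forall>a\<in>Ap. 0 < lam b a) \<and> sum (lam b) Ap = 1 \<and>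
      (\<Sum>a\<in>Ap. lam b a *\<^sub>R real_vec a) = real_vec b"
    by metis
  define mu where "mu = Min ((\<lambda>(b,a). lam b a) ` (Am \<times> Ap))"
  have finBA: "finite ((\<lambda>(b,a). lam b a) ` (Am \<times> Ap))" using fA fB by simp
  have neBA: "(\<lambda>(b,a). lam b a) ` (Am \<times> Ap) \<noteq> {}" using neA neB by simp
  have mu_pos: "0 < mu" unfolding mu_def using Min_gr_iff[OF finBA neBA] lam by auto
  have mu_le: "\<forall>b\<in>Am. \<forall>a\<in>Ap. mu \<le> lam b a"
    unfolding mu_def using finBA by (auto intro!: Min_le)
  define Ds where "Ds = (\<lambda>a. real_vec a - real_vec a0) ` Ap"
  have spanA: "\<forall>a\<in>Ap. real_vec a - real_vec a0 \<in> span Ds"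
    by (auto simp: Ds_def intro: span_base)
  have spanB: "\<forall>b\<in>Am. real_vec b - real_vec a0 \<in> span Ds"
  proof
    fix b assume b: "b \<in> Am"
    have "(\<Sum>a\<in>Ap. lam b a *\<^sub>R (real_vec a - real_vec a0)) =
        (\<Sum>a\<in>Ap. lam b a *\<^sub>R real_vec a) - (\<Sum>a\<in>Ap. lam b a) *\<^sub>R real_vec a0"
      by (simp add: scaleR_diff_right sum_subtractf scaleR_sum_left)
    also have "\<dots> = real_vec b - real_vec a0" using lam b by simp
    finally have eq: "real_vec b - real_vec a0 = (\<Sum>a\<in>Ap. lam b a *\<^sub>R (real_vec a - real_vec a0))" by simp
    show "real_vec b - real_vec a0 \<in> span Ds"
      unfolding eq using spanA by (intro span_sum span_scale) auto
  qed
  have orthz: "(\<forall>a\<in>Ap. real_vec a \<bullet> z = real_vec a0 \<bullet> z) \<and> (\<forall>b\<in>Am. real_vec b \<bullet> z = real_vec a0 \<bullet> z)"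
    if z: "\<And>w. w \<in> span Ds \<Longrightarrow> orthogonal z w" for z
  proof -
    have "(real_vec a - real_vec a0) \<bullet> z = 0" if "real_vec a - real_vec a0 \<in> span Ds" for a
      using z[OF that] by (simp add: orthogonal_def inner_commute)
    then show ?thesis using spanA spanB by (auto simp: inner_diff_left)
  qed
  define cmin where "cmin = Min (c ` Ap)"
  have cmin_pos: "0 < cmin" unfolding cmin_def using fA neA cpos by (simp add: Min_gr_iff)
  have cmin_le: "\<forall>a\<in>Ap. cmin \<le> c a" unfolding cmin_def using fA by simp
  have cb0: "0 < c b0" using cpos b0 by auto
  define T where "T = max 1 ((\<Sum>a\<in>Ap. c a) / c b0)"
  have T1: "1 \<le> T" unfolding T_def by simp
  define Csum where "Csum = (\<Sum>b\<in>Am. c b * T ^ nat (h b))"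
  define Dd where "Dd = ln (Csum / cmin) / mu"
  have bnd: "\<forall>a\<in>Ap. \<forall>a'\<in>Ap. real_vec a \<bullet> y - real_vec a' \<bullet> y \<le> Dd"
    if t: "0 \<le> t" "t \<le> T" and gy: "g t y \<le> 0" for t y
    unfolding Dd_def
  proof (rule bound_lemma[OF fA fB neA _ mu_pos cmin_le cmin_pos, where lam = lam
        and w = "\<lambda>b. real_vec b \<bullet> y" and d = "\<lambda>b. c b * t ^ nat (h b)"])
    show "\<forall>b\<in>Am. (\<forall>a\<in>Ap. mu \<le> lam b a) \<and> sum (lam b) Ap = 1 \<and>
        real_vec b \<bullet> y = (\<Sum>a\<in>Ap. lam b a * (real_vec a \<bullet> y))"
    proof
      fix b assume b: "b \<in> Am"
      have "real_vec b \<bullet> y = (\<Sum>a\<in>Ap. lam b a *\<^sub>R real_vec a) \<bullet> y" using lam b by simp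
      also have "\<dots> = (\<Sum>a\<in>Ap. lam b a * (real_vec a \<bullet> y))" by (simp add: inner_sum_left)
      finally show "(\<forall>a\<in>Ap. mu \<le> lam b a) \<and> sum (lam b) Ap = 1 \<and>
        real_vec b \<bullet> y = (\<Sum>a\<in>Ap. lam b a * (real_vec a \<bullet> y))" using lam mu_le b by blast
    qed
    show "\<forall>b\<in>Am. 0 \<le> c b * t ^ nat (h b)"
    proof
      fix b assume "b \<in> Am"
      then have "0 < c b" using cpos by auto
      then show "0 \<le> c b * t ^ nat (h b)" using t by simp
    qed
    show "(\<Sum>a\<in>Ap. c a * exp (real_vec a \<bullet> y)) \<le> (\<Sum>b\<in>Am. c b * t ^ nat (h b) * exp (real_vec b \<bullet> y))"
      using gy unfolding g_def sg_def by simp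
    show "(\<Sum>b\<in>Am. c b * t ^ nat (h b)) \<le> Csum"
    proof -
      have cB: "\<And>b. b \<in> Am \<Longrightarrow> 0 \<le> c b" using cpos by (metis UnI2 less_imp_le)
      show ?thesis
        unfolding Csum_def using cB t by (intro sum_mono mult_left_mono power_mono) auto
    qed
  qed
  define G where "G y = (\<Sum>a\<in>Ap. ((real_vec a - real_vec a0) \<bullet> y) *\<^sub>R (real_vec a - real_vec a0))" for y
  have blG: "bounded_linear G" unfolding G_def by (intro bounded_linear_sum bounded_linear_intros)
  have kerG: "\<forall>y\<in>span Ds. G y = 0 \<longrightarrow> y = 0"
  proof (intro ballI impI)
    fix y assume y: "y \<in> span Ds" and Gy: "G y = 0"
    have "0 = y \<bullet> G y" using Gy by simp
    also have "\<dots> = (\<Sum>a\<in>Ap. ((real_vec a - real_vec a0) \<bullet> y)\<^sup>2)"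
      unfolding G_def by (simp add: inner_sum_right power2_eq_square inner_commute)
    finally have "(\<Sum>a\<in>Ap. ((real_vec a - real_vec a0) \<bullet> y)\<^sup>2) = 0" by simp
    then have "\<forall>a\<in>Ap. ((real_vec a - real_vec a0) \<bullet> y)\<^sup>2 = 0"
      using fA by (simp add: sum_nonneg_eq_0_iff)
    then have "\<And>w. w \<in> Ds \<Longrightarrow> orthogonal y w" by (auto simp: Ds_def orthogonal_def inner_commute)
    then have "orthogonal y y" using orthogonal_to_span y by blast
    then show "y = 0" by (simp add: orthogonal_def)
  qed
  obtain e where e: "e > 0" "\<forall>y\<in>span Ds. e * norm y \<le> norm (G y)"
    using injective_imp_isometric[OF closed_span subspace_span blG kerG] by blast
  define R where "R = max 0 (Dd * (\<Sum>a\<in>Ap. norm (real_vec a - real_vec a0)) / e)"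
  have inC: "norm y \<le> R" if y: "y \<in> span Ds" and yb: "\<forall>a\<in>Ap. \<bar>(real_vec a - real_vec a0) \<bullet> y\<bar> \<le> Dd" for y
  proof -
    have "e * norm y \<le> norm (G y)" using e y by blast
    also have "\<dots> \<le> (\<Sum>a\<in>Ap. norm (((real_vec a - real_vec a0) \<bullet> y) *\<^sub>R (real_vec a - real_vec a0)))"
      unfolding G_def by (rule norm_sum)
    also have "\<dots> = (\<Sum>a\<in>Ap. \<bar>(real_vec a - real_vec a0) \<bullet> y\<bar> * norm (real_vec a - real_vec a0))"
      by simp
    also have "\<dots> \<le> (\<Sum>a\<in>Ap. Dd * norm (real_vec a - real_vec a0))"
      using yb by (intro sum_mono mult_right_mono) auto
    also have "\<dots> = Dd * (\<Sum>a\<in>Ap. norm (real_vec a - real_vec a0))" by (simp add: sum_distrib_left)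
    finally have "norm y \<le> Dd * (\<Sum>a\<in>Ap. norm (real_vec a - real_vec a0)) / e"
      using e by (simp add: field_simps)
    then show ?thesis unfolding R_def by linarith
  qed
  define Z where "Z = ({0..T} \<times> (cball 0 R \<inter> span Ds)) \<inter> {p. g (fst p) (snd p) \<le> 0}"
  have cZ: "compact Z" unfolding Z_def g_def
    by (intro compact_Int_closed compact_Times compact_Icc compact_cball closed_span
        closed_Collect_le sg_cont continuous_on_const)
  have gT: "g T 0 \<le> 0"
  proof -
    have "(\<Sum>a\<in>Ap. c a) = c b0 * ((\<Sum>a\<in>Ap. c a) / c b0)" using cb0 by simp
    also have "\<dots> \<le> c b0 * T" unfolding T_def using cb0 by (intro mult_left_mono) auto
    finally have "(\<Sum>a\<in>Ap. c a) \<le> c b0 * T" .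
    also have "\<dots> \<le> c b0 * T ^ nat (h b0)"
      using cb0 T1 hB b0 by (intro mult_left_mono self_le_power) auto
    also have "\<dots> \<le> (\<Sum>b\<in>Am. c b * T ^ nat (h b))"
    proof (rule member_le_sum)
      fix x assume "x \<in> Am - {b0}"
      then have "0 < c x" using cBp by blast
      moreover have "0 \<le> T ^ nat (h x)" using T1 by simp
      ultimately show "0 \<le> c x * T ^ nat (h x)" by simp
    qed (use fB b0 in auto)
    finally show ?thesis unfolding g_def sg_def by simp
  qed
  have "0 \<le> R" unfolding R_def by simp
  then have "(T, 0) \<in> Z" unfolding Z_def using T1 gT by (auto simp: span_zero)
  then have neZ: "fst ` Z \<noteq> {}" by blast
  have "compact (fst ` Z)" using cZ by (intro compact_continuous_image continuous_intros)
  then obtain t0 where t0Z: "t0 \<in> fst ` Z" and t0min: "\<forall>t\<in>fst ` Z. t0 \<le> t"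
    using compact_attains_inf[OF _ neZ] by blast
  then obtain y0 where y0Z: "(t0, y0) \<in> Z" by force
  have t0T: "0 \<le> t0" "t0 \<le> T" and gy0: "g t0 y0 \<le> 0" using y0Z unfolding Z_def by auto
  have g0: "0 < g 0 y" for y
  proof -
    have "(\<Sum>b\<in>Am. c b * 0 ^ nat (h b) * exp (real_vec b \<bullet> y)) = 0"
      using hB by (intro sum.neutral) auto
    moreover have "0 < (\<Sum>a\<in>Ap. c a * exp (real_vec a \<bullet> y))"
      using fA neA cpos by (intro sum_pos) auto
    ultimately show ?thesis unfolding g_def sg_def by simp
  qed
  have t0pos: "0 < t0" using g0[of y0] gy0 t0T(1) by (cases "t0 = 0") auto
  have key: "0 < g t y" if t: "0 \<le> t" "t < t0" for t y
  proof (rule ccontr)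
    assume "\<not> 0 < g t y"
    then have gty: "g t y \<le> 0" by simp
    obtain y1 z where y1: "y1 \<in> span Ds" and z: "\<And>w. w \<in> span Ds \<Longrightarrow> orthogonal z w"
      and yz: "y = y1 + z"
      using orthogonal_subspace_decomp_exists[of Ds y] by metis
    have "g t y = exp (real_vec a0 \<bullet> z) * g t y1"
      unfolding yz g_def using orthz[OF z] by (intro sg_shift) auto
    then have g1: "g t y1 \<le> 0" using gty by (simp add: mult_le_0_iff)
    have "\<forall>a\<in>Ap. \<forall>a'\<in>Ap. real_vec a \<bullet> y1 - real_vec a' \<bullet> y1 \<le> Dd"
      using bnd[OF t(1) _ g1] t t0T by linarith
    then have "\<forall>a\<in>Ap. \<bar>(real_vec a - real_vec a0) \<bullet> y1\<bar> \<le> Dd"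
      using a0 by (auto simp: inner_diff_left abs_le_iff)
    then have "norm y1 \<le> R" using inC y1 by blast
    then have "(t, y1) \<in> Z" unfolding Z_def using t t0T g1 y1 by auto
    then have "t0 \<le> t" using t0min by force
    then show False using t by simp
  qed
  have nonneg: "0 \<le> g t0 y" for y
  proof -
    have "isCont (\<lambda>t. g t y) t0" unfolding g_def sg_def by (intro continuous_intros)
    then have "((\<lambda>t. g t y) \<longlongrightarrow> g t0 y) (at t0)" by (simp add: isCont_def)
    then have lim: "((\<lambda>t. g t y) \<longlongrightarrow> g t0 y) (at_left t0)" by (simp add: filterlim_at_split)
    have "eventually (\<lambda>t. t \<in> {0<..<t0}) (at_left t0)" using t0pos by (rule eventually_at_left_real)
    then have "eventually (\<lambda>t. 0 \<le> g t y) (at_left t0)"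
      by eventually_elim (use key in \<open>auto intro: less_imp_le\<close>)
    then show ?thesis using tendsto_lowerbound[OF lim] by simp
  qed
  have gz: "g t0 y0 = 0" using gy0 nonneg[of y0] by simp
  define x0 where "x0 = E y0"
  have x0pos: "x0 \<in> pos_orthant" unfolding x0_def by (rule E_pos)
  have lnE: "x = E (\<chi> i. ln (x$i))" if "x \<in> pos_orthant" for x :: "real^'n" using E_ln[OF that] by simp
  have F0: "signomial Ap Am (star_pow c t0 h) x0 = 0" unfolding x0_def sig gz ..
  have Fnn: "\<forall>x\<in>pos_orthant. signomial Ap Am (star_pow c t0 h) x0 \<le> signomial Ap Am (star_pow c t0 h) x"
  proof
    fix x :: "real^'n" assume x: "x \<in> pos_orthant"
    show "signomial Ap Am (star_pow c t0 h) x0 \<le> signomial Ap Am (star_pow c t0 h) x"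
      unfolding F0 using nonneg sig lnE[OF x] by metis
  qed
  have crit0: "critical_zero Ap Am (star_pow c t0 h) x0"
    unfolding critical_zero_def
  proof (intro conjI allI)
    show "signomial Ap Am (star_pow c t0 h) x0 = 0" by (rule F0)
    fix i
    have "0 < x0 $ i" using x0pos by (simp add: pos_orthant_def)
    then have "partial (signomial Ap Am (star_pow c t0 h)) i x0 = 0"
      using crit[OF x0pos Fnn sig_diff[OF fA fB]] by blast
    then show "x0 $ i * partial (signomial Ap Am (star_pow c t0 h)) i x0 = 0" by simp
  qed
  have t0S: "t0 \<in> S" unfolding S_def using t0pos x0pos crit0 by blast
  have t0le: "\<forall>t\<in>S. t0 \<le> t"
  proof
    fix t assume "t \<in> S"
    then obtain x where t: "0 < t" and x: "x \<in> pos_orthant" and cz: "critical_zero Ap Am (star_pow c t h) x"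
      unfolding S_def by blast
    have "signomial Ap Am (star_pow c t h) x = 0" using cz unfolding critical_zero_def by blast
    then have "g t (\<chi> i. ln (x$i)) = 0" using sig lnE[OF x] by metis
    then have gt: "g t (\<chi> i. ln (x$i)) = 0" .
    show "t0 \<le> t"
    proof (rule ccontr)
      assume "\<not> t0 \<le> t"
      then have "0 < g t (\<chi> i. ln (x$i))" using key[of t] t by simp
      then show False using gt by simp
    qed
  qed
  have c1: "star_pow c 1 h = c" unfolding star_pow_def by auto
  have "copositive_on_orthant (signomial Ap Am c) \<longleftrightarrow> 1 \<le> t0"
  proof
    assume cop: "copositive_on_orthant (signomial Ap Am c)"
    show "1 \<le> t0"
    proof (rule ccontr)
      assume "\<not> 1 \<le> t0"
      then have lt: "t0 < 1" by simp
      have "(\<Sum>b\<in>Am. c b * t0 ^ nat (h b) * exp (real_vec b \<bullet> y0)) < (\<Sum>b\<in>Am. c b * 1 ^ nat (h b) * exp (real_vec b \<bullet> y0))"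
      proof (rule sum_strict_mono[OF fB neB])
        fix b assume b: "b \<in> Am"
        have "t0 ^ nat (h b) < 1" using t0T lt hB b by (simp add: power_less_one_iff)
        then show "c b * t0 ^ nat (h b) * exp (real_vec b \<bullet> y0) < c b * 1 ^ nat (h b) * exp (real_vec b \<bullet> y0)"
          using cpos b by simp
      qed
      then have "g 1 y0 < g t0 y0" unfolding g_def sg_def by simp
      then have "signomial Ap Am c x0 < 0" using gz sig[of 1 y0] c1 unfolding x0_def by simp
      then show False using cop x0pos unfolding copositive_on_orthant_def by force
    qed
  next
    assume t1: "1 \<le> t0"
    show "copositive_on_orthant (signomial Ap Am c)"
      unfolding copositive_on_orthant_def
    proof
      fix x :: "real^'n" assume x: "x \<in> pos_orthant"
      have "0 \<le> g 1 (\<chi> i. ln (x$i))"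
      proof (cases "1 < t0")
        case True
        have "0 < g 1 (\<chi> i. ln (x$i))" by (rule key) (use True in auto)
        then show ?thesis by simp
      next
        case False then have "t0 = 1" using t1 by simp
        then show ?thesis using nonneg by metis
      qed
      then show "0 \<le> signomial Ap Am c x" using sig[of 1] c1 lnE[OF x] by metis
    qed
  qed
  then show ?thesis using t0S t0le by blast
qed

end
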